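(* Let $\alpha,\beta,\gamma\in\mathbf S^2$ and put $A=\mathcal R_\gamma^\pi\circ\mathcal R_\beta^\pi\circ\mathcal R_\alpha^\pi$ and $B=\mathcal R_\alpha^\pi\circ\mathcal R_\gamma^\pi\circ\mathcal R_\beta^\pi$. Suppose $A$ is not the identity. Then $A$ and $B$ have the same axis of rotation if and only if one of the following holds: (i) $\mathbf R\beta=\mathbf R\gamma$; (ii) $\langle\gamma,\beta\rangle_E=0$ and $\det_3(\alpha\beta\gamma)^2\neq1$; (iii) $\langle\alpha,\beta\rangle_E=0=\langle\alpha,\gamma\rangle_E$ and $\langle\gamma,\beta\rangle_E\neq0$. Moreover, if $b\in\mathbf S^2$ lies on this common axis and one sets $c=\mathcal R_\alpha^\pi(b)$ and $a=\mathcal R_\gamma^\pi(b)$, then in case (i) $b=c=\pm\alpha$; in case (ii) $c=-b$; and in case (iii) $-a=b=c=\pm\alpha$.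
   Context: For a nonzero $v\in\mathbf R^3$ and $\phi\in\mathbf R$, $\mathcal R_v^\phi$ denotes the rotation of $\mathbf R^3$ by angle $\phi$ about the axis $\mathbf Rv$; $\mathcal R_v^\pi$ is the half-turn about $\mathbf Rv$. $\langle\cdot,\cdot\rangle_E$ is the Euclidean inner product, $\mathbf S^2$ the unit sphere, $\det_3(\alpha\beta\gamma)$ the determinant with columns $\alpha,\beta,\gamma$. The axis of a rotation different from the identity is its (one-dimensional) fixed line. *)

theory Defs
  imports "HOL-Analysis.Analysis"
begin

text \<open>Rotation of R^3 by angle phi about the axis R v (v nonzero), via Rodrigues' formula
  with the unit vector u = v / |v| (right-hand orientation).\<close>
definition rot :: "real^3 \<Rightarrow> real \<Rightarrow> real^3 \<Rightarrow> real^3" where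
  "rot v \<phi> x = (let u = (1 / norm v) *\<^sub>R v in
      cos \<phi> *\<^sub>R x + sin \<phi> *\<^sub>R cross3 u x + ((1 - cos \<phi>) * (u \<bullet> x)) *\<^sub>R u)"

definition halfturn :: "real^3 \<Rightarrow> real^3 \<Rightarrow> real^3" where
  "halfturn v = rot v pi"

text \<open>Axis of a rotation (different from the identity): its fixed line.\<close>
definition rot_axis :: "(real^3 \<Rightarrow> real^3) \<Rightarrow> (real^3) set" where
  "rot_axis f = {x. f x = x}"

definition det3 :: "real^3 \<Rightarrow> real^3 \<Rightarrow> real^3 \<Rightarrow> real" where
  "det3 a b c = det (transpose (vector [a, b, c] :: real^3^3))"

end

theory Submission
  imports Defs
begin


definition RQ :: "real \<Rightarrow> real^3 \<Rightarrow> real^3 \<Rightarrow> real^3" where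
  "RQ t v x = (t^2 - v \<bullet> v) *\<^sub>R x + (2*(v \<bullet> x)) *\<^sub>R v + (2*t) *\<^sub>R cross3 v x"

lemma Rcomp: "RQ t1 v1 (RQ t2 v2 x) = RQ (t1*t2 - v1 \<bullet> v2) (t1 *\<^sub>R v2 + t2 *\<^sub>R v1 + cross3 v1 v2) x"
  unfolding RQ_def by (simp add: cross3_def inner_vec_def sum_3 vec_eq_iff forall_3 power2_eq_square algebra_simps)

lemma qnorm: "(t1*t2 - v1 \<bullet> v2)^2 + (t1 *\<^sub>R v2 + t2 *\<^sub>R v1 + cross3 v1 v2) \<bullet> (t1 *\<^sub>R v2 + t2 *\<^sub>R v1 + cross3 v1 v2)
   = (t1^2 + v1 \<bullet> v1) * (t2^2 + v2 \<bullet> v2)"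
  by (simp add: cross3_def inner_vec_def sum_3 power2_eq_square algebra_simps)

lemma halfturn_R: "norm v = 1 \<Longrightarrow> halfturn v x = RQ 0 v x"
proof -
  assume "norm v = 1"
  then have "v \<bullet> v = 1" by (simp add: dot_square_norm)
  then show ?thesis unfolding halfturn_def rot_def RQ_def using \<open>norm v = 1\<close> by simp
qed

lemma det3_eq: "det3 a b c = a \<bullet> cross3 b c"
  unfolding det3_def by (simp add: det_3 cross3_def inner_vec_def sum_3 vector_def transpose_def algebra_simps)



definition VV :: "real^3 \<Rightarrow> real^3 \<Rightarrow> real^3 \<Rightarrow> real^3" where
  "VV a b c = (c \<bullet> a) *\<^sub>R b - (c \<bullet> b) *\<^sub>R a - (a \<bullet> b) *\<^sub>R c"

lemma cc: "cross3 u (cross3 u x) = (u \<bullet> x) *\<^sub>R u - (u \<bullet> u) *\<^sub>R x"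
  by (simp add: cross3_def inner_vec_def sum_3 vec_eq_iff forall_3 algebra_simps)

lemma unit_dot: "norm a = 1 \<Longrightarrow> a \<bullet> a = 1"
  by (simp add: dot_square_norm)

lemma comp3:
  assumes "norm a = 1" "norm b = 1" "norm c = 1"
  shows "halfturn c \<circ> halfturn b \<circ> halfturn a = RQ (- (c \<bullet> cross3 b a)) (VV a b c)"
    and "(c \<bullet> cross3 b a)^2 + VV a b c \<bullet> VV a b c = 1"
proof -
  have e1: "0 * (0 * 0 - b \<bullet> a) - c \<bullet> (0 *\<^sub>R a + 0 *\<^sub>R b + cross3 b a) = - (c \<bullet> cross3 b a)"
    by simp
  have e2: "0 *\<^sub>R (0 *\<^sub>R a + 0 *\<^sub>R b + cross3 b a) + (0 * 0 - b \<bullet> a) *\<^sub>R c + cross3 c (0 *\<^sub>R a + 0 *\<^sub>R b + cross3 b a) = VV a b c"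
    unfolding VV_def by (simp add: cross3_def inner_vec_def sum_3 vec_eq_iff forall_3 algebra_simps)
  show "halfturn c \<circ> halfturn b \<circ> halfturn a = RQ (- (c \<bullet> cross3 b a)) (VV a b c)"
  proof
    fix x
    have "(halfturn c \<circ> halfturn b \<circ> halfturn a) x = RQ 0 c (RQ 0 b (RQ 0 a x))"
      using assms by (simp add: halfturn_R)
    also have "\<dots> = RQ (- (c \<bullet> cross3 b a)) (VV a b c) x"
      unfolding Rcomp e1 e2 ..
    finally show "(halfturn c \<circ> halfturn b \<circ> halfturn a) x = RQ (- (c \<bullet> cross3 b a)) (VV a b c) x" .
  qed
  have n1: "(0 * 0 - b \<bullet> a)^2 + (0 *\<^sub>R a + 0 *\<^sub>R b + cross3 b a) \<bullet> (0 *\<^sub>R a + 0 *\<^sub>R b + cross3 b a) = 1"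
    unfolding qnorm using assms by (simp add: unit_dot)
  have "(0 * (0 * 0 - b \<bullet> a) - c \<bullet> (0 *\<^sub>R a + 0 *\<^sub>R b + cross3 b a))^2 + 
     (0 *\<^sub>R (0 *\<^sub>R a + 0 *\<^sub>R b + cross3 b a) + (0 * 0 - b \<bullet> a) *\<^sub>R c + cross3 c (0 *\<^sub>R a + 0 *\<^sub>R b + cross3 b a)) \<bullet>
     (0 *\<^sub>R (0 *\<^sub>R a + 0 *\<^sub>R b + cross3 b a) + (0 * 0 - b \<bullet> a) *\<^sub>R c + cross3 c (0 *\<^sub>R a + 0 *\<^sub>R b + cross3 b a)) = 1"
    unfolding qnorm n1 using assms by (simp add: unit_dot)
  then show "(c \<bullet> cross3 b a)^2 + VV a b c \<bullet> VV a b c = 1"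
    unfolding e1 e2 by simp
qed

lemma fixRQ:
  assumes "t^2 + v \<bullet> v = 1" "v \<noteq> 0"
  shows "{x. RQ t v x = x} = span {v}"
proof
  show "{x. RQ t v x = x} \<subseteq> span {v}"
  proof
    fix x assume "x \<in> {x. RQ t v x = x}"
    hence e: "RQ t v x = x" by simp
    have "x \<bullet> RQ t v x = x \<bullet> x" using e by simp
    hence h: "(t^2 - v \<bullet> v)*(x \<bullet> x) + 2*(v \<bullet> x)*(v \<bullet> x) = x \<bullet> x" unfolding RQ_def
      by (simp add: inner_add_right inner_commute dot_cross_self)
    have t2: "t^2 = 1 - v \<bullet> v" using assms(1) by simp
    have h2: "(v \<bullet> v)*(x \<bullet> x) = (v \<bullet> x)^2" using h unfolding t2 by (simp add: algebra_simps power2_eq_square)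
    have "(norm (cross3 v x))^2 + (v \<bullet> x)^2 = (norm v * norm x)^2" by (rule norm_cross_dot)
    also have "\<dots> = (v \<bullet> v)*(x \<bullet> x)" by (simp add: power_mult_distrib power2_norm_eq_inner)
    finally have "norm (cross3 v x) = 0" using h2 by simp
    hence "cross3 v x = 0" by simp
    hence "(v \<bullet> x) *\<^sub>R v = (v \<bullet> v) *\<^sub>R x" using cc[of v x] by simp
    moreover have "v \<bullet> v \<noteq> 0" using assms(2) by simp
    ultimately have "x = ((v \<bullet> x)/(v \<bullet> v)) *\<^sub>R v"
      by (metis (no_types, lifting) divide_inverse_commute inverse_eq_divide scaleR_one scaleR_scaleR right_inverse mult.commute)
    thus "x \<in> span {v}" by (metis span_base span_mul singletonI)
  qed
  show "span {v} \<subseteq> {x. RQ t v x = x}"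
  proof
    fix x assume "x \<in> span {v}"
    then obtain k where x: "x = k *\<^sub>R v" by (auto simp: span_singleton)
    have "RQ t v x = (k * (t^2 + v \<bullet> v)) *\<^sub>R v" unfolding x RQ_def
      by (simp add: cross_mult_right vec_eq_iff algebra_simps)
    thus "x \<in> {x. RQ t v x = x}" using assms(1) x by simp
  qed
qed



lemma ht: "norm v = 1 \<Longrightarrow> halfturn v x = (2*(v \<bullet> x)) *\<^sub>R v - x"
  by (simp add: halfturn_R RQ_def unit_dot)

lemma spaneq:
  assumes "u \<noteq> 0" "u' \<noteq> 0"
  shows "span {u} = span {u'} \<longleftrightarrow> cross3 u u' = 0"
proof
  assume "span {u} = span {u'}"
  hence "u' \<in> span {u}" by (simp add: span_base)
  then obtain k where "u' = k *\<^sub>R u" by (auto simp: span_singleton)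
  thus "cross3 u u' = 0" by (simp add: cross_mult_right)
next
  assume h: "cross3 u u' = 0"
  hence e: "(u \<bullet> u') *\<^sub>R u = (u \<bullet> u) *\<^sub>R u'" using cc[of u u'] by simp
  have uu: "u \<bullet> u \<noteq> 0" using assms by simp
  have nz: "u \<bullet> u' \<noteq> 0" using e assms uu by auto
  have u': "u' = ((u \<bullet> u')/(u \<bullet> u)) *\<^sub>R u" using e uu
    by (metis (no_types, lifting) divide_inverse_commute inverse_eq_divide scaleR_one scaleR_scaleR right_inverse mult.commute)
  have u: "u = ((u \<bullet> u)/(u \<bullet> u')) *\<^sub>R u'" using e nz
    by (metis (no_types, lifting) divide_inverse_commute inverse_eq_divide scaleR_one scaleR_scaleR right_inverse mult.commute)
  have "u' \<in> span {u}" "u \<in> span {u'}" 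
    by (metis u' span_base span_mul singletonI, metis u span_base span_mul singletonI)
  hence "span {u'} \<subseteq> span (span {u})" "span {u} \<subseteq> span (span {u'})"
    by (simp_all add: span_mono)
  thus "span {u} = span {u'}" by (simp add: span_span)
qed

lemma pm_unit:
  assumes "norm (b::real^3) = 1" "norm a = 1" "b = m *\<^sub>R a"
  shows "m = 1 \<or> m = -1"
proof -
  have "\<bar>m\<bar> = 1" using assms by simp
  thus ?thesis by auto
qed



theorem mainTheorem6:
  fixes \<alpha> \<beta> \<gamma> :: "real^3"
  assumes "norm \<alpha> = 1" and "norm \<beta> = 1" and "norm \<gamma> = 1"
    and "halfturn \<gamma> \<circ> halfturn \<beta> \<circ> halfturn \<alpha> \<noteq> id"
  shows "(rot_axis (halfturn \<gamma> \<circ> halfturn \<beta> \<circ> halfturn \<alpha>)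
           = rot_axis (halfturn \<alpha> \<circ> halfturn \<gamma> \<circ> halfturn \<beta>)
         \<longleftrightarrow> (span {\<beta>} = span {\<gamma>}
              \<or> (\<gamma> \<bullet> \<beta> = 0 \<and> (det3 \<alpha> \<beta> \<gamma>)\<^sup>2 \<noteq> 1)
              \<or> (\<alpha> \<bullet> \<beta> = 0 \<and> \<alpha> \<bullet> \<gamma> = 0 \<and> \<gamma> \<bullet> \<beta> \<noteq> 0)))
       \<and> (\<forall>b. norm b = 1
           \<and> rot_axis (halfturn \<gamma> \<circ> halfturn \<beta> \<circ> halfturn \<alpha>)
             = rot_axis (halfturn \<alpha> \<circ> halfturn \<gamma> \<circ> halfturn \<beta>)
           \<and> b \<in> rot_axis (halfturn \<gamma> \<circ> halfturn \<beta> \<circ> halfturn \<alpha>)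
         \<longrightarrow> (let c = halfturn \<alpha> b; a = halfturn \<gamma> b in
              (span {\<beta>} = span {\<gamma>} \<longrightarrow> b = c \<and> (c = \<alpha> \<or> c = - \<alpha>))
            \<and> (\<gamma> \<bullet> \<beta> = 0 \<and> (det3 \<alpha> \<beta> \<gamma>)\<^sup>2 \<noteq> 1 \<longrightarrow> c = - b)
            \<and> (\<alpha> \<bullet> \<beta> = 0 \<and> \<alpha> \<bullet> \<gamma> = 0 \<and> \<gamma> \<bullet> \<beta> \<noteq> 0
                 \<longrightarrow> - a = b \<and> b = c \<and> (c = \<alpha> \<or> c = - \<alpha>))))"
proof -
  define p where "p = \<alpha> \<bullet> \<beta>"
  define q where "q = \<gamma> \<bullet> \<beta>"
  define r where "r = \<gamma> \<bullet> \<alpha>"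
  define w where "w = r *\<^sub>R \<beta> - p *\<^sub>R \<gamma>"
  define V where "V = VV \<alpha> \<beta> \<gamma>"
  define V' where "V' = VV \<beta> \<gamma> \<alpha>"
  define sA where "sA = - (\<gamma> \<bullet> cross3 \<beta> \<alpha>)"
  define sB where "sB = - (\<alpha> \<bullet> cross3 \<gamma> \<beta>)"
  have aa: "\<alpha> \<bullet> \<alpha> = 1" using assms(1) by (rule unit_dot)
  have VwA: "V = w - q *\<^sub>R \<alpha>" unfolding V_def VV_def w_def p_def q_def r_def by simp
  have VwB: "V' = - w - q *\<^sub>R \<alpha>" unfolding V'_def VV_def w_def p_def q_def r_def
    by (simp add: inner_commute algebra_simps)
  have aw: "\<alpha> \<bullet> w = 0" unfolding w_def p_def r_def by (simp add: inner_commute algebra_simps)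
  have HA: "halfturn \<gamma> \<circ> halfturn \<beta> \<circ> halfturn \<alpha> = RQ sA V"
    and nA: "sA^2 + V \<bullet> V = 1"
    using comp3[OF assms(1-3)] unfolding sA_def V_def by simp_all
  have HB: "halfturn \<alpha> \<circ> halfturn \<gamma> \<circ> halfturn \<beta> = RQ sB V'"
    and nB: "sB^2 + V' \<bullet> V' = 1"
    using comp3[OF assms(2,3,1)] unfolding sB_def V'_def by simp_all
  have Vnz: "V \<noteq> 0"
  proof
    assume "V = 0"
    hence "sA^2 = 1" using nA by simp
    hence "RQ sA V = id" using \<open>V = 0\<close> by (auto simp: RQ_def fun_eq_iff)
    thus False using assms(4) HA by simp
  qed
  have V'nz: "V' \<noteq> 0"
  proof
    assume "V' = 0"
    hence "\<alpha> \<bullet> V' = 0" by simp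
    hence "q = 0" unfolding VwB using aw aa by (simp add: inner_diff_right)
    hence "w = 0" using \<open>V' = 0\<close> VwB by simp
    thus False using Vnz VwA \<open>q = 0\<close> by simp
  qed
  have axA: "rot_axis (halfturn \<gamma> \<circ> halfturn \<beta> \<circ> halfturn \<alpha>) = span {V}"
    unfolding rot_axis_def HA using fixRQ[OF nA Vnz] .
  have axB: "rot_axis (halfturn \<alpha> \<circ> halfturn \<gamma> \<circ> halfturn \<beta>) = span {V'}"
    unfolding rot_axis_def HB using fixRQ[OF nB V'nz] .
  have crossVV: "cross3 V V' = (2*q) *\<^sub>R cross3 \<alpha> w" unfolding VwA VwB
    by (simp add: cross3_def vec_eq_iff forall_3 algebra_simps)
  have aw0: "cross3 \<alpha> w = 0 \<longleftrightarrow> w = 0"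
  proof
    assume h: "cross3 \<alpha> w = 0"
    have "(norm (cross3 \<alpha> w))^2 + (\<alpha> \<bullet> w)^2 = (norm \<alpha> * norm w)^2" by (rule norm_cross_dot)
    thus "w = 0" using h aw assms(1) by simp
  qed simp
  have same: "(rot_axis (halfturn \<gamma> \<circ> halfturn \<beta> \<circ> halfturn \<alpha>)
           = rot_axis (halfturn \<alpha> \<circ> halfturn \<gamma> \<circ> halfturn \<beta>)) \<longleftrightarrow> q = 0 \<or> w = 0"
    unfolding axA axB spaneq[OF Vnz V'nz] crossVV aw0[symmetric] by simp
  have det: "(det3 \<alpha> \<beta> \<gamma>)^2 = sA^2" unfolding det3_eq sA_def
    by (simp add: cross3_def inner_vec_def sum_3 power2_eq_square algebra_simps)
  have C1w: "span {\<beta>} = span {\<gamma>} \<Longrightarrow> w = 0"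
  proof -
    assume "span {\<beta>} = span {\<gamma>}"
    hence "\<gamma> \<in> span {\<beta>}" by (simp add: span_base)
    then obtain k where k: "\<gamma> = k *\<^sub>R \<beta>" by (auto simp: span_singleton)
    show "w = 0" unfolding w_def r_def p_def k by (simp add: inner_commute)
  qed
  have C3w: "\<alpha> \<bullet> \<beta> = 0 \<Longrightarrow> \<alpha> \<bullet> \<gamma> = 0 \<Longrightarrow> w = 0"
    unfolding w_def r_def p_def by (simp add: inner_commute)
  have part1: "(q = 0 \<or> w = 0) \<longleftrightarrow> (span {\<beta>} = span {\<gamma>}
              \<or> (\<gamma> \<bullet> \<beta> = 0 \<and> (det3 \<alpha> \<beta> \<gamma>)\<^sup>2 \<noteq> 1)
              \<or> (\<alpha> \<bullet> \<beta> = 0 \<and> \<alpha> \<bullet> \<gamma> = 0 \<and> \<gamma> \<bullet> \<beta> \<noteq> 0))"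
  proof
    assume h: "q = 0 \<or> w = 0"
    show "span {\<beta>} = span {\<gamma>}
              \<or> (\<gamma> \<bullet> \<beta> = 0 \<and> (det3 \<alpha> \<beta> \<gamma>)\<^sup>2 \<noteq> 1)
              \<or> (\<alpha> \<bullet> \<beta> = 0 \<and> \<alpha> \<bullet> \<gamma> = 0 \<and> \<gamma> \<bullet> \<beta> \<noteq> 0)"
    proof (cases "q = 0")
      case True
      have "V \<bullet> V \<noteq> 0" using Vnz by simp
      hence "(det3 \<alpha> \<beta> \<gamma>)\<^sup>2 \<noteq> 1" using det nA by (metis add_cancel_left_right)
      thus ?thesis using True q_def by simp
    next
      case False
      hence w0: "w = 0" using h by simp
      show ?thesis
      proof (cases "p = 0 \<and> r = 0")
        case True
        thus ?thesis using False unfolding p_def q_def r_def by (simp add: inner_commute)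
      next
        case False
        have e: "r *\<^sub>R \<beta> = p *\<^sub>R \<gamma>" using w0 unfolding w_def by simp
        have bz: "\<beta> \<noteq> 0" "\<gamma> \<noteq> 0" using assms by auto
        have pr: "p \<noteq> 0" "r \<noteq> 0" using e False bz by auto
        have "(r/p) *\<^sub>R \<beta> = (1/p) *\<^sub>R (r *\<^sub>R \<beta>)" by simp
        also have "\<dots> = \<gamma>" using e pr by simp
        moreover have "(p/r) *\<^sub>R \<gamma> = (1/r) *\<^sub>R (p *\<^sub>R \<gamma>)" by simp
        moreover have "(1/r) *\<^sub>R (p *\<^sub>R \<gamma>) = \<beta>" using e pr by (metis scaleR_scaleR divide_self_if mult.commute times_divide_eq_left scaleR_one)
        ultimately have "\<gamma> = (r/p) *\<^sub>R \<beta>" "\<beta> = (p/r) *\<^sub>R \<gamma>" by simp_all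
        hence "\<gamma> \<in> span {\<beta>}" "\<beta> \<in> span {\<gamma>}"
          by (metis span_base span_mul singletonI)+
        hence "span {\<gamma>} \<subseteq> span (span {\<beta>})" "span {\<beta>} \<subseteq> span (span {\<gamma>})"
          by (simp_all add: span_mono)
        hence "span {\<beta>} = span {\<gamma>}" by (simp add: span_span)
        thus ?thesis by simp
      qed
    qed
  next
    assume "span {\<beta>} = span {\<gamma>}
              \<or> (\<gamma> \<bullet> \<beta> = 0 \<and> (det3 \<alpha> \<beta> \<gamma>)\<^sup>2 \<noteq> 1)
              \<or> (\<alpha> \<bullet> \<beta> = 0 \<and> \<alpha> \<bullet> \<gamma> = 0 \<and> \<gamma> \<bullet> \<beta> \<noteq> 0)"
    thus "q = 0 \<or> w = 0" using C1w C3w q_def by blast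
  qed
  have part2: "let c = halfturn \<alpha> b; a = halfturn \<gamma> b in
              (span {\<beta>} = span {\<gamma>} \<longrightarrow> b = c \<and> (c = \<alpha> \<or> c = - \<alpha>))
            \<and> (\<gamma> \<bullet> \<beta> = 0 \<and> (det3 \<alpha> \<beta> \<gamma>)\<^sup>2 \<noteq> 1 \<longrightarrow> c = - b)
            \<and> (\<alpha> \<bullet> \<beta> = 0 \<and> \<alpha> \<bullet> \<gamma> = 0 \<and> \<gamma> \<bullet> \<beta> \<noteq> 0
                 \<longrightarrow> - a = b \<and> b = c \<and> (c = \<alpha> \<or> c = - \<alpha>))"
    if b1: "norm b = 1" and bax: "b \<in> rot_axis (halfturn \<gamma> \<circ> halfturn \<beta> \<circ> halfturn \<alpha>)" for b
  proof -
    obtain k where bk: "b = k *\<^sub>R V" using bax unfolding axA by (auto simp: span_singleton)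
    have walpha: "w = 0 \<Longrightarrow> b = \<alpha> \<or> b = - \<alpha>"
    proof -
      assume "w = 0"
      hence "b = (- (k*q)) *\<^sub>R \<alpha>" using bk VwA by simp
      moreover then have "- (k*q) = 1 \<or> - (k*q) = -1" using pm_unit b1 assms(1) by blast
      ultimately show ?thesis by auto
    qed
    have cb: "b = \<alpha> \<or> b = - \<alpha> \<Longrightarrow> halfturn \<alpha> b = b"
      using aa by (auto simp: ht[OF assms(1)] scaleR_2)
    have s1: "span {\<beta>} = span {\<gamma>} \<longrightarrow> b = halfturn \<alpha> b \<and> (halfturn \<alpha> b = \<alpha> \<or> halfturn \<alpha> b = - \<alpha>)"
      using C1w walpha cb by auto
    have s2: "\<gamma> \<bullet> \<beta> = 0 \<and> (det3 \<alpha> \<beta> \<gamma>)\<^sup>2 \<noteq> 1 \<longrightarrow> halfturn \<alpha> b = - b"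
    proof
      assume "\<gamma> \<bullet> \<beta> = 0 \<and> (det3 \<alpha> \<beta> \<gamma>)\<^sup>2 \<noteq> 1"
      hence "q = 0" using q_def by simp
      hence "\<alpha> \<bullet> b = 0" using bk VwA aw by simp
      thus "halfturn \<alpha> b = - b" by (simp add: ht[OF assms(1)])
    qed
    have s3: "\<alpha> \<bullet> \<beta> = 0 \<and> \<alpha> \<bullet> \<gamma> = 0 \<and> \<gamma> \<bullet> \<beta> \<noteq> 0
                 \<longrightarrow> - halfturn \<gamma> b = b \<and> b = halfturn \<alpha> b \<and> (halfturn \<alpha> b = \<alpha> \<or> halfturn \<alpha> b = - \<alpha>)"
    proof
      assume h: "\<alpha> \<bullet> \<beta> = 0 \<and> \<alpha> \<bullet> \<gamma> = 0 \<and> \<gamma> \<bullet> \<beta> \<noteq> 0"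
      hence w0: "w = 0" using C3w by simp
      hence ba: "b = \<alpha> \<or> b = - \<alpha>" by (rule walpha)
      have "\<gamma> \<bullet> b = 0" using ba h by (auto simp: inner_commute)
      hence "- halfturn \<gamma> b = b" by (simp add: ht[OF assms(3)])
      thus "- halfturn \<gamma> b = b \<and> b = halfturn \<alpha> b \<and> (halfturn \<alpha> b = \<alpha> \<or> halfturn \<alpha> b = - \<alpha>)"
        using ba cb by auto
    qed
    show ?thesis unfolding Let_def using s1 s2 s3 by blast
  qed
  show ?thesis using same part1 part2 by blast
qed


end
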